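(* Let $P=\bigcup_{i=1}^n I_i$, $I_i=[p_{i-1},p_i]$, be a simple closed $n$-gon in $\mathbb{R}^2$ ($n\ge3$, indices modulo $n$). For $1\le i\le n$ let $u_i$ be the unit normal to $\mathrm{aff}\,I_i$ oriented so that for every $b\in\mathrm{relint}\,I_i$ and all sufficiently small $\varepsilon>0$, $b+\varepsilon u_i\in\mathrm{ext}P$ and $b-\varepsilon u_i\in\mathrm{int}P$; put $u_{i,i+1}=u_i+u_{i+1}$. (a) Fix $i$, $1\le i\le n$, let $b\in\mathrm{relint}\,I_i$ and let $u$ be a vector with $\langle u,u_i\rangle>0$. For real $\varepsilon$ put $I^\varepsilon=[b+\varepsilon u,\ p_i+\varepsilon u_{i,i+1}]$. Then for every sufficiently small $\varepsilon>0$ (how small may depend on $b$ and $u$), $I^\varepsilon\subset\mathrm{ext}P$ and $I^{-\varepsilon}\subset\mathrm{int}P$. (b) Fix $i$, $1\le i\le n$, and for real $\varepsilon$ put $J^\varepsilon=[p_i+\varepsilon u_{i,i+1},\ p_{i+1}+\varepsilon u_{i+1,i+2}]$. Then for every sufficiently small $\varepsilon>0$, $J^\varepsilon\subset\mathrm{ext}P$ and $J^{-\varepsilon}\subset\mathrm{int}P$.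
   Context: A simple closed $n$-gon is a polygon $P=\bigcup_{i=1}^n[p_{i-1},p_i]$ with $n$ distinct vertices, $p_n=p_0$, whose edges intersect only in the common endpoints of consecutive edges. $\mathbb{R}^2\setminus P$ has exactly two components: the bounded one $\mathrm{int}P$ and the unbounded one $\mathrm{ext}P$. $[x,y]$ denotes the closed segment, $\mathrm{relint}$ relative interior, $\mathrm{aff}$ affine hull. *)

theory Defs
  imports "HOL-Analysis.Analysis"
begin

text \<open>A polygon with vertices p 0, ..., p (n-1), indices taken modulo n
  (p is assumed n-periodic where used).  Edge I_i = [p (i-1), p i] for 1 <= i <= n.\<close>

definition polygon_edge :: "(nat \<Rightarrow> real^2) \<Rightarrow> nat \<Rightarrow> (real^2) set" where
  "polygon_edge p i = closed_segment (p (i - 1)) (p i)"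

definition polygon :: "nat \<Rightarrow> (nat \<Rightarrow> real^2) \<Rightarrow> (real^2) set" where
  "polygon n p = (\<Union>i\<in>{1..n}. polygon_edge p i)"

definition simple_closed_polygon :: "nat \<Rightarrow> (nat \<Rightarrow> real^2) \<Rightarrow> bool" where
  "simple_closed_polygon n p \<longleftrightarrow>
     n \<ge> 3 \<and> (\<forall>i. p (i + n) = p i) \<and> inj_on p {0..<n} \<and>
     (\<forall>i\<in>{1..n}. \<forall>j\<in>{1..n}. i \<noteq> j \<longrightarrow>
        polygon_edge p i \<inter> polygon_edge p j \<subseteq> {p (i - 1), p i} \<inter> {p (j - 1), p j})"

end

theory Submission
  imports Defs
begin


lemma mod_suc_inj: "(0::nat) < n \<Longrightarrow> Suc a mod n = Suc b mod n \<Longrightarrow> a mod n = b mod n"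
  by (metis gr0_conv_Suc less_numeral_extra(3) mod_Suc old.nat.inject)

lemma mod_suc_ne: "(2::nat) \<le> n \<Longrightarrow> Suc a mod n \<noteq> a mod n"
  by (auto simp: mod_Suc)

lemma mod_suc_cong: "a mod n = b mod (n::nat) \<Longrightarrow> Suc a mod n = Suc b mod n"
  by (metis mod_Suc_eq)

locale spoly =
  fixes n :: nat and p u :: "nat \<Rightarrow> real^2"
  assumes simple: "simple_closed_polygon n p"
    and u_periodic: "\<forall>i. u (i + n) = u i"
    and u_normal: "\<forall>i\<in>{1..n}. norm (u i) = 1 \<and> u i \<bullet> (p i - p (i - 1)) = 0 \<and>
        (\<forall>b\<in>rel_interior (polygon_edge p i). \<forall>\<^sub>F \<epsilon> in at_right 0.
            b + \<epsilon> *\<^sub>R u i \<in> outside (polygon n p) \<and> b - \<epsilon> *\<^sub>R u i \<in> inside (polygon n p))"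
begin

abbreviation "E \<equiv> polygon_edge p"
abbreviation "PP \<equiv> polygon n p"

lemma n3: "n \<ge> 3" using simple by (simp add: simple_closed_polygon_def)
lemma npos: "n > 0" using n3 by simp

lemma p_per: "p (i + k*n) = p i"
proof (induction k)
  case (Suc k)
  have "p (i + Suc k * n) = p ((i + k*n) + n)" by (simp add: algebra_simps)
  also have "\<dots> = p (i + k*n)" using simple by (simp add: simple_closed_polygon_def)
  finally show ?case using Suc by simp
qed simp

lemma u_per: "u (i + k*n) = u i"
proof (induction k)
  case (Suc k)
  have "u (i + Suc k * n) = u ((i + k*n) + n)" by (simp add: algebra_simps)
  also have "\<dots> = u (i + k*n)" using u_periodic by simp
  finally show ?case using Suc by simp
qed simp

lemma p_mod: "p (m mod n) = p m"
  using p_per[of "m mod n" "m div n"] by simp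

lemma u_mod: "u (m mod n) = u m"
  using u_per[of "m mod n" "m div n"] by simp

lemma p_eq_iff: "p a = p b \<longleftrightarrow> a mod n = b mod n"
proof
  assume "p a = p b"
  then have "p (a mod n) = p (b mod n)" by (simp add: p_mod)
  moreover have "a mod n \<in> {0..<n}" "b mod n \<in> {0..<n}" using npos by auto
  ultimately show "a mod n = b mod n" using simple
    unfolding simple_closed_polygon_def inj_on_def by blast
next
  assume "a mod n = b mod n" then show "p a = p b" by (metis p_mod)
qed

definition red :: "nat \<Rightarrow> nat" where "red k = (k - 1) mod n + 1"

lemma red_in: "red k \<in> {1..n}"
  using mod_less_divisor[OF npos, of "k-1"] by (simp add: red_def)

lemma red_mod: "1 \<le> k \<Longrightarrow> red k mod n = k mod n"
proof -
  assume "1 \<le> k"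
  have "Suc ((k-1) mod n) mod n = Suc (k-1) mod n" by (rule mod_Suc_eq)
  then show ?thesis using \<open>1 \<le> k\<close> by (simp add: red_def)
qed

lemma red_m1: "red k - 1 = (k - 1) mod n" by (simp add: red_def)

lemma pm1_red: "p (red k - 1) = p (k - 1)"
  unfolding red_m1 by (rule p_mod)
lemma p_red: "1 \<le> k \<Longrightarrow> p (red k) = p k"
  unfolding p_eq_iff by (rule red_mod)

lemma E_red: "1 \<le> k \<Longrightarrow> E (red k) = E k"
  unfolding polygon_edge_def by (simp only: pm1_red p_red)

lemma u_red: "1 \<le> k \<Longrightarrow> u (red k) = u k"
  by (metis red_mod u_mod)

lemma m1_mod: "1 \<le> j \<Longrightarrow> 1 \<le> k \<Longrightarrow> j mod n = k mod n \<Longrightarrow> (j - 1) mod n = (k - 1) mod n"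
  using mod_suc_inj[OF npos, of "j-1" "k-1"] by simp

lemma E_eq: assumes "1 \<le> j" "1 \<le> k" "j mod n = k mod n" shows "E j = E k"
proof -
  have "p (j - 1) = p (k - 1)" "p j = p k" using m1_mod[OF assms] assms(3) p_eq_iff by blast+
  then show ?thesis unfolding polygon_edge_def by simp
qed

lemma u_eq: "j mod n = k mod n \<Longrightarrow> u j = u k"
  by (metis u_mod)

lemma u_ext:
  assumes "1 \<le> k"
  shows "norm (u k) = 1" "u k \<bullet> (p k - p (k - 1)) = 0"
    "\<And>b. b\<in>rel_interior (E k) \<Longrightarrow> \<forall>\<^sub>F \<epsilon> in at_right 0.
            b + \<epsilon> *\<^sub>R u k \<in> outside PP \<and> b - \<epsilon> *\<^sub>R u k \<in> inside PP"
proof -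
  have h: "norm (u (red k)) = 1 \<and> u (red k) \<bullet> (p (red k) - p (red k - 1)) = 0 \<and>
        (\<forall>b\<in>rel_interior (E (red k)). \<forall>\<^sub>F \<epsilon> in at_right 0.
            b + \<epsilon> *\<^sub>R u (red k) \<in> outside PP \<and> b - \<epsilon> *\<^sub>R u (red k) \<in> inside PP)"
    using u_normal red_in[of k] by blast
  show "norm (u k) = 1" "u k \<bullet> (p k - p (k - 1)) = 0"
    using h by (simp_all only: E_red[OF assms] u_red[OF assms] pm1_red p_red[OF assms])
  show "\<And>b. b\<in>rel_interior (E k) \<Longrightarrow> \<forall>\<^sub>F \<epsilon> in at_right 0.
            b + \<epsilon> *\<^sub>R u k \<in> outside PP \<and> b - \<epsilon> *\<^sub>R u k \<in> inside PP"
    using h by (simp only: E_red[OF assms] u_red[OF assms])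
qed

lemma simple_ext:
  assumes "1 \<le> j" "1 \<le> k" "j mod n \<noteq> k mod n"
  shows "E j \<inter> E k \<subseteq> {p (j - 1), p j} \<inter> {p (k - 1), p k}"
proof -
  have "red j \<noteq> red k" using assms red_mod by metis
  then have "E (red j) \<inter> E (red k) \<subseteq> {p (red j - 1), p (red j)} \<inter> {p (red k - 1), p (red k)}"
    using simple red_in unfolding simple_closed_polygon_def by blast
  then show ?thesis by (simp only: E_red[OF assms(1)] E_red[OF assms(2)] pm1_red p_red[OF assms(1)] p_red[OF assms(2)])
qed

lemma PP_iff: "x \<in> PP \<longleftrightarrow> (\<exists>k\<ge>1. x \<in> E k)"
proof
  assume "x \<in> PP"
  then obtain k where "k \<in> {1..n}" "x \<in> E k" unfolding polygon_def by blast
  then show "\<exists>k\<ge>1. x \<in> E k" by auto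
next
  assume "\<exists>k\<ge>1. x \<in> E k"
  then obtain k where k: "1 \<le> k" "x \<in> E k" by blast
  then have "x \<in> E (red k)" using E_red by simp
  then show "x \<in> PP" unfolding polygon_def using red_in by blast
qed

lemma pne: "1 \<le> k \<Longrightarrow> p (k - 1) \<noteq> p k"
  using p_eq_iff mod_suc_ne[of n "k-1"] n3 by simp

lemma p_in_E: "p k \<in> E k" "p (k - 1) \<in> E k"
  unfolding polygon_edge_def by auto

lemma p_notin_E:
  assumes "1 \<le> j" "1 \<le> k" "j mod n \<noteq> k mod n" "j mod n \<noteq> Suc k mod n"
  shows "p k \<notin> E j"
proof (rule notI)
  assume "p k \<in> E j"
  then have "p k = p (j - 1) \<or> p k = p j" using simple_ext[OF assms(1,2,3)] p_in_E by blast
  then show False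
  proof (elim disjE)
    assume "p k = p (j - 1)"
    then have "k mod n = (j - 1) mod n" by (simp add: p_eq_iff)
    then have "Suc k mod n = Suc (j - 1) mod n" by (rule mod_suc_cong)
    then show False using assms by simp
  next
    assume "p k = p j" then show False using assms by (simp add: p_eq_iff)
  qed
qed

end


lemma inner2: "(x::real^2) \<bullet> y = x$1 * y$1 + x$2 * y$2"
  by (simp add: inner_vec_def sum_2)

lemma nz2: "(x::real^2) \<noteq> 0 \<longleftrightarrow> x$1 \<noteq> 0 \<or> x$2 \<noteq> 0"
  by (metis (mono_tags, lifting) exhaust_2 vec_eq_iff zero_index)

lemma cross_real:
  fixes a1 a2 d1 d2 e1 e2 :: real
  assumes "a1 \<noteq> 0 \<or> a2 \<noteq> 0" "a1*d1 + a2*d2 = 0" "a1*e1 + a2*e2 = 0"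
  shows "d1 * e2 = d2 * e1"
proof -
  have "a1 * (d1 * e2 - d2 * e1) = e2 * (a1*d1 + a2*d2) - d2 * (a1*e1 + a2*e2)" by algebra
  then have 1: "a1 * (d1 * e2 - d2 * e1) = 0" using assms by simp
  have "a2 * (d1 * e2 - d2 * e1) = d1 * (a1*e1 + a2*e2) - e1 * (a1*d1 + a2*d2)" by algebra
  then have 2: "a2 * (d1 * e2 - d2 * e1) = 0" using assms by simp
  show ?thesis using 1 2 assms(1) by auto
qed

lemma perp_real:
  fixes c1 c2 d1 d2 e1 e2 :: real
  assumes "e1 \<noteq> 0 \<or> e2 \<noteq> 0" "d1 * e2 = d2 * e1" "c1*e1 + c2*e2 = 0"
  shows "c1*d1 + c2*d2 = 0"
proof -
  have "(c1*d1 + c2*d2) * e1 = d1 * (c1*e1 + c2*e2) + c2 * (d2 * e1 - d1 * e2)" by algebra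
  then have 1: "(c1*d1 + c2*d2) * e1 = 0" using assms by simp
  have "(c1*d1 + c2*d2) * e2 = d2 * (c1*e1 + c2*e2) + c1 * (d1 * e2 - d2 * e1)" by algebra
  then have 2: "(c1*d1 + c2*d2) * e2 = 0" using assms by simp
  show ?thesis using 1 2 assms(1) by auto
qed

lemma perp_transfer:
  fixes a c d e :: "real^2"
  assumes "a \<noteq> 0" "e \<noteq> 0" "a \<bullet> d = 0" "c \<bullet> e = 0" "e \<bullet> a = 0"
  shows "d \<bullet> c = 0"
proof -
  have "d$1 * e$2 = d$2 * e$1"
    using cross_real[of "a$1" "a$2" "d$1" "d$2" "e$1" "e$2"] assms nz2[of a]
    by (simp add: inner2 mult.commute)
  then show ?thesis
    using perp_real[of "e$1" "e$2" "d$1" "d$2" "c$1" "c$2"] assms nz2[of e]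
    by (simp add: inner2 mult.commute)
qed


lemma ev_small: "0 < (B::real) \<Longrightarrow> \<forall>\<^sub>F \<eta> in at_right 0. \<eta> * A < B"
proof -
  assume "0 < B"
  have "((\<lambda>\<eta>. \<eta> * A) \<longlongrightarrow> 0 * A) (at_right (0::real))"
    by (intro tendsto_intros)
  then show ?thesis using \<open>0 < B\<close> order_tendstoD(2) by fastforce
qed

lemma at_right_nb: "at_right (0::real) \<noteq> bot" by simp

lemma ev_pos: "\<forall>\<^sub>F \<eta> in at_right (0::real). 0 < \<eta>"
  by (rule eventually_at_right_less)

context spoly begin

lemma conn_out:
  assumes "connected C" "C \<inter> PP = {}" "x \<in> C" "x \<in> outside PP"
  shows "C \<subseteq> outside PP"
proof
  fix y assume "y \<in> C"
  then have "connected_component (- PP) x y"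
    unfolding connected_component_def using assms by blast
  then show "y \<in> outside PP" using outside_same_component assms(4) by blast
qed

lemma conn_in:
  assumes "connected C" "C \<inter> PP = {}" "x \<in> C" "x \<in> inside PP"
  shows "C \<subseteq> inside PP"
proof
  fix y assume "y \<in> C"
  then have "connected_component (- PP) x y"
    unfolding connected_component_def using assms by blast
  then show "y \<in> inside PP" using inside_same_component assms(4) by blast
qed

lemma vertex_ball:
  assumes k: "1 \<le> k"
  shows "\<exists>r>0. \<forall>x. dist (p k) x < r \<longrightarrow> x \<in> PP \<longrightarrow> x \<in> E k \<union> E (Suc k)"
proof -
  define Oth where "Oth = \<Union> (E ` {j\<in>{1..n}. j mod n \<noteq> k mod n \<and> j mod n \<noteq> Suc k mod n})"
  have "closed Oth" unfolding Oth_def polygon_edge_def by (intro closed_Union) auto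
  moreover have "p k \<notin> Oth" unfolding Oth_def using p_notin_E k by auto
  ultimately obtain r where r: "r > 0" "ball (p k) r \<subseteq> - Oth"
    using open_contains_ball[of "- Oth"] by auto
  have "x \<in> E k \<union> E (Suc k)" if hx: "dist (p k) x < r" "x \<in> PP" for x
  proof -
    obtain j where j: "1 \<le> j" "x \<in> E j" using hx(2) PP_iff by blast
    show ?thesis
    proof (cases "j mod n = k mod n \<or> j mod n = Suc k mod n")
      case True
      then show ?thesis using E_eq[OF j(1) k] E_eq[OF j(1), of "Suc k"] j by auto
    next
      case False
      then have "x \<in> Oth" unfolding Oth_def using red_in[of j] red_mod[OF j(1)] E_red[OF j(1)] j(2)
        by (intro UnionI[of "E (red j)"]) auto
      then show ?thesis using r hx(1) by auto
    qed
  qed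
  then show ?thesis using r by blast
qed

lemma E_param: "x \<in> E k \<Longrightarrow> \<exists>l. 0 \<le> l \<and> l \<le> 1 \<and> x = p k - l *\<^sub>R (p k - p (k - 1))"
proof -
  assume "x \<in> E k"
  then obtain m where m: "0 \<le> m" "m \<le> 1" "x = (1 - m) *\<^sub>R p (k - 1) + m *\<^sub>R p k"
    unfolding polygon_edge_def in_segment by blast
  then have "x = p k - (1 - m) *\<^sub>R (p k - p (k - 1))" by (simp add: algebra_simps)
  then show ?thesis using m by (intro exI[of _ "1 - m"]) auto
qed

lemma E_param2: "x \<in> E (Suc k) \<Longrightarrow> \<exists>l. 0 \<le> l \<and> l \<le> 1 \<and> x = p k + l *\<^sub>R (p (Suc k) - p k)"
  unfolding polygon_edge_def in_segment by (auto simp: algebra_simps)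


lemma W_conv:
  "convex {x. dist q x < r \<and> (x - q) \<bullet> \<alpha> > 0 \<and> (x - q) \<bullet> \<beta> > 0}"
proof -
  have "{x. dist q x < r \<and> (x - q) \<bullet> \<alpha> > 0 \<and> (x - q) \<bullet> \<beta> > 0}
      = ball q r \<inter> {x. inner \<alpha> x > inner \<alpha> q} \<inter> {x. inner \<beta> x > inner \<beta> q}"
    by (auto simp: inner_diff_left inner_diff_right inner_commute)
  then show ?thesis
    by (metis convex_Int convex_ball convex_halfspace_gt)
qed

lemma W_disj:
  assumes k: "1 \<le> k"
    and r: "\<forall>x. dist (p k) x < r \<longrightarrow> x \<in> PP \<longrightarrow> x \<in> E k \<union> E (Suc k)"
    and cd: "\<alpha> \<bullet> (p k - p (k - 1)) = 0 \<or> \<beta> \<bullet> (p k - p (k - 1)) = 0"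
    and ce: "\<alpha> \<bullet> (p (Suc k) - p k) = 0 \<or> \<beta> \<bullet> (p (Suc k) - p k) = 0"
  shows "{x. dist (p k) x < r \<and> (x - p k) \<bullet> \<alpha> > 0 \<and> (x - p k) \<bullet> \<beta> > 0} \<inter> PP = {}"
proof -
  have False if x: "dist (p k) x < r" "(x - p k) \<bullet> \<alpha> > 0" "(x - p k) \<bullet> \<beta> > 0" "x \<in> PP" for x
  proof -
    have "x \<in> E k \<union> E (Suc k)" using r x by blast
    then show False
    proof
      assume "x \<in> E k"
      then obtain l where "x = p k - l *\<^sub>R (p k - p (k - 1))" using E_param by blast
      then have "x - p k = - (l *\<^sub>R (p k - p (k - 1)))" by simp
      then show False using cd x(2,3) by (auto simp: inner_commute)
    next
      assume "x \<in> E (Suc k)"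
      then obtain l where "x = p k + l *\<^sub>R (p (Suc k) - p k)" using E_param2 by blast
      then have "x - p k = l *\<^sub>R (p (Suc k) - p k)" by simp
      then show False using ce x(2,3) by (auto simp: inner_commute)
    qed
  qed
  then show ?thesis by blast
qed

lemma vertex_contra:
  fixes X Y :: "real \<Rightarrow> real \<Rightarrow> real^2"
  assumes k: "1 \<le> k"
    and cd: "\<alpha> \<bullet> (p k - p (k - 1)) = 0 \<or> \<beta> \<bullet> (p k - p (k - 1)) = 0"
    and ce: "\<alpha> \<bullet> (p (Suc k) - p k) = 0 \<or> \<beta> \<bullet> (p (Suc k) - p k) = 0"
    and ev: "\<And>l. 0 < l \<Longrightarrow> l < 1 \<Longrightarrow> \<forall>\<^sub>F \<eta> in at_right 0.
       X l \<eta> \<in> outside PP \<and> Y l \<eta> \<in> inside PP \<and>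
       (X l \<eta> - p k) \<bullet> \<alpha> > 0 \<and> (X l \<eta> - p k) \<bullet> \<beta> > 0 \<and>
       (Y l \<eta> - p k) \<bullet> \<alpha> > 0 \<and> (Y l \<eta> - p k) \<bullet> \<beta> > 0 \<and>
       norm (X l \<eta> - p k) \<le> l * K + \<eta> \<and> norm (Y l \<eta> - p k) \<le> l * K + \<eta>"
  shows False
proof -
  obtain r where r0: "r > 0" and r: "\<forall>x. dist (p k) x < r \<longrightarrow> x \<in> PP \<longrightarrow> x \<in> E k \<union> E (Suc k)"
    using vertex_ball[OF k] by blast
  define l where "l = min (1/2) (r / (2 * (\<bar>K\<bar> + 1)))"
  have l0: "0 < l" "l < 1" using r0 by (auto simp: l_def)
  have "l * \<bar>K\<bar> \<le> (r / (2 * (\<bar>K\<bar> + 1))) * \<bar>K\<bar>"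
    by (intro mult_right_mono) (auto simp: l_def)
  also have "\<dots> < r / 2"
    using r0 by (simp add: field_simps)
  finally have lK: "l * K < r / 2"
    by (smt (verit) l0(1) abs_ge_self mult_left_mono)
  have "\<forall>\<^sub>F \<eta> in at_right 0. \<eta> * 1 < r / 2" using r0 by (intro ev_small) simp
  then have "\<forall>\<^sub>F \<eta> in at_right 0. (\<eta> * 1 < r / 2) \<and>
       X l \<eta> \<in> outside PP \<and> Y l \<eta> \<in> inside PP \<and>
       (X l \<eta> - p k) \<bullet> \<alpha> > 0 \<and> (X l \<eta> - p k) \<bullet> \<beta> > 0 \<and>
       (Y l \<eta> - p k) \<bullet> \<alpha> > 0 \<and> (Y l \<eta> - p k) \<bullet> \<beta> > 0 \<and>
       norm (X l \<eta> - p k) \<le> l * K + \<eta> \<and> norm (Y l \<eta> - p k) \<le> l * K + \<eta>"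
    using ev[OF l0] by (rule eventually_conj)
  then obtain \<eta> where \<eta>: "\<eta> * 1 < r / 2"
       "X l \<eta> \<in> outside PP" "Y l \<eta> \<in> inside PP"
       "(X l \<eta> - p k) \<bullet> \<alpha> > 0" "(X l \<eta> - p k) \<bullet> \<beta> > 0"
       "(Y l \<eta> - p k) \<bullet> \<alpha> > 0" "(Y l \<eta> - p k) \<bullet> \<beta> > 0"
       "norm (X l \<eta> - p k) \<le> l * K + \<eta>" "norm (Y l \<eta> - p k) \<le> l * K + \<eta>"
    using eventually_happens'[OF at_right_nb] by blast
  define W where "W = {x. dist (p k) x < r \<and> (x - p k) \<bullet> \<alpha> > 0 \<and> (x - p k) \<bullet> \<beta> > 0}"
  have WP: "W \<inter> PP = {}" unfolding W_def by (rule W_disj[OF k r cd ce])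
  have cW: "connected W" unfolding W_def by (intro convex_connected W_conv)
  have "dist (p k) (X l \<eta>) < r" "dist (p k) (Y l \<eta>) < r"
    using \<eta> lK by (simp_all add: dist_norm norm_minus_commute)
  then have XW: "X l \<eta> \<in> W" and YW: "Y l \<eta> \<in> W" using \<eta> by (auto simp: W_def)
  have "W \<subseteq> outside PP" by (rule conn_out[OF cW WP XW \<eta>(2)])
  then show False using YW \<eta>(3) inside_Int_outside by blast
qed


lemma pts:
  assumes k: "1 \<le> k" and l: "0 < l" "l < 1"
  shows "\<forall>\<^sub>F \<eta> in at_right 0.
     (p k - l *\<^sub>R (p k - p (k - 1))) + \<eta> *\<^sub>R u k \<in> outside PP \<and>
     (p k - l *\<^sub>R (p k - p (k - 1))) - \<eta> *\<^sub>R u k \<in> inside PP \<and>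
     (p k + l *\<^sub>R (p (Suc k) - p k)) + \<eta> *\<^sub>R u (Suc k) \<in> outside PP \<and>
     (p k + l *\<^sub>R (p (Suc k) - p k)) - \<eta> *\<^sub>R u (Suc k) \<in> inside PP"
proof -
  have b1: "p k - l *\<^sub>R (p k - p (k - 1)) \<in> rel_interior (E k)"
  proof -
    have "p k - l *\<^sub>R (p k - p (k - 1)) \<in> open_segment (p (k - 1)) (p k)"
      unfolding in_segment(2) using pne[OF k] l
      by (intro conjI exI[of _ "1 - l"]) (auto simp: algebra_simps)
    then show ?thesis unfolding polygon_edge_def rel_interior_closed_segment using pne[OF k] by simp
  qed
  have b2: "p k + l *\<^sub>R (p (Suc k) - p k) \<in> rel_interior (E (Suc k))"
  proof -
    have ne: "p k \<noteq> p (Suc k)" using pne[of "Suc k"] by simp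
    have "p k + l *\<^sub>R (p (Suc k) - p k) \<in> open_segment (p k) (p (Suc k))"
      unfolding in_segment(2) using ne l
      by (intro conjI exI[of _ "l"]) (auto simp: algebra_simps)
    then show ?thesis unfolding polygon_edge_def rel_interior_closed_segment using ne by simp
  qed
  show ?thesis
    using eventually_conj[OF u_ext(3)[OF k b1] u_ext(3)[of "Suc k", OF _ b2]] by simp
qed

lemma consist:
  assumes k: "1 \<le> k" and dd: "d = p k - p (k - 1)" and ee: "e = p (Suc k) - p k"
    and aa: "a = u k" and cc: "c = u (Suc k)"
  shows "e \<bullet> a > 0 \<Longrightarrow> d \<bullet> c < 0" "e \<bullet> a < 0 \<Longrightarrow> d \<bullet> c > 0"
    "e \<bullet> a = 0 \<Longrightarrow> d \<bullet> c = 0" "d \<bullet> c = 0 \<Longrightarrow> e \<bullet> a = 0" "a \<bullet> c > -1"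
proof -
  have ad: "a \<bullet> d = 0" using u_ext(2)[OF k] dd aa by simp
  have ce: "c \<bullet> e = 0" using u_ext(2)[of "Suc k"] ee cc by simp
  have na: "norm a = 1" using u_ext(1)[OF k] aa by simp
  have nc: "norm c = 1" using u_ext(1)[of "Suc k"] cc by simp
  have a2: "a \<bullet> a = 1" using na by (metis power2_norm_eq_inner power_one)
  have c2: "c \<bullet> c = 1" using nc by (metis power2_norm_eq_inner power_one)
  have a0: "a \<noteq> 0" and c0: "c \<noteq> 0" using na nc by auto
  have d0: "d \<noteq> 0" using pne[OF k] dd by simp
  have e0: "e \<noteq> 0" using pne[of "Suc k"] ee by simp
  have acb: "\<bar>a \<bullet> c\<bar> \<le> 1" using Cauchy_Schwarz_ineq2[of a c] na nc by simp
  show C3: "e \<bullet> a = 0 \<Longrightarrow> d \<bullet> c = 0" using perp_transfer[OF a0 e0 ad ce] by simp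
  show C4: "d \<bullet> c = 0 \<Longrightarrow> e \<bullet> a = 0" using perp_transfer[OF c0 d0 ce ad] by simp
  have Xn: "norm (\<eta> *\<^sub>R v - l *\<^sub>R w) \<le> l * (norm d + norm e) + \<eta>"
    if "0 < \<eta>" "0 < l" "norm v = 1" "w = d \<or> w = e" for \<eta> l v w
  proof -
    have "norm (\<eta> *\<^sub>R v - l *\<^sub>R w) \<le> norm (\<eta> *\<^sub>R v) + norm (l *\<^sub>R w)" by (rule norm_triangle_ineq4)
    also have "\<dots> = \<eta> + l * norm w" using that by simp
    also have "\<dots> \<le> \<eta> + l * (norm d + norm e)" using that by (auto intro!: mult_left_mono)
    finally show ?thesis by simp
  qed
  have Xn2: "norm (l *\<^sub>R w + \<eta> *\<^sub>R v) \<le> l * (norm d + norm e) + \<eta>"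
    if "0 < \<eta>" "0 < l" "norm v = 1" "w = d \<or> w = e" for \<eta> l v w
  proof -
    have "l *\<^sub>R w + \<eta> *\<^sub>R v = - (\<eta> *\<^sub>R (-v) - l *\<^sub>R w)" by (simp add: algebra_simps)
    then have "norm (l *\<^sub>R w + \<eta> *\<^sub>R v) = norm (\<eta> *\<^sub>R (-v) - l *\<^sub>R w)"
      by (metis norm_minus_cancel)
    then show ?thesis using Xn[OF that(1,2) _ that(4), of "-v"] that(3) by simp
  qed
  have ab: "\<eta> * t < B" "- B < \<eta> * t" if "0 < \<eta>" "\<eta> * \<bar>t\<bar> < B" for \<eta> t B :: real
  proof -
    have "\<eta> * t \<le> \<eta> * \<bar>t\<bar>" using that(1) by (intro mult_left_mono) auto
    moreover have "- (\<eta> * \<bar>t\<bar>) \<le> \<eta> * t" using mult_left_mono[of "-\<bar>t\<bar>" t \<eta>] that(1) by simp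
    ultimately
    show "\<eta> * t < B" "- B < \<eta> * t" using that by linarith+
  qed
  show "e \<bullet> a > 0 \<Longrightarrow> d \<bullet> c < 0"
  proof (rule ccontr)
    assume ea: "e \<bullet> a > 0" and "\<not> d \<bullet> c < 0"
    then have dc: "d \<bullet> c > 0" using C4 by fastforce
    show False
    proof (rule vertex_contra[OF k, of a "-c" "\<lambda>l \<eta>. (p k - l *\<^sub>R d) + \<eta> *\<^sub>R a"
          "\<lambda>l \<eta>. (p k + l *\<^sub>R e) - \<eta> *\<^sub>R c" "norm d + norm e"])
      show "a \<bullet> (p k - p (k - 1)) = 0 \<or> - c \<bullet> (p k - p (k - 1)) = 0" using ad dd by simp
      show "a \<bullet> (p (Suc k) - p k) = 0 \<or> - c \<bullet> (p (Suc k) - p k) = 0" using ce ee by simp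
    next
      fix l :: real assume l: "0 < l" "l < 1"
      have ev: "\<forall>\<^sub>F \<eta> in at_right 0. ((0 < \<eta> \<and> \<eta> * \<bar>a \<bullet> c\<bar> < l * (d \<bullet> c)) \<and> \<eta> * \<bar>a \<bullet> c\<bar> < l * (e \<bullet> a)) \<and>
         ((p k - l *\<^sub>R d) + \<eta> *\<^sub>R a \<in> outside PP \<and> (p k - l *\<^sub>R d) - \<eta> *\<^sub>R a \<in> inside PP \<and>
          (p k + l *\<^sub>R e) + \<eta> *\<^sub>R c \<in> outside PP \<and> (p k + l *\<^sub>R e) - \<eta> *\<^sub>R c \<in> inside PP)"
      proof -
        have e1: "\<forall>\<^sub>F \<eta> in at_right 0. (p k - l *\<^sub>R d) + \<eta> *\<^sub>R a \<in> outside PP \<and> (p k - l *\<^sub>R d) - \<eta> *\<^sub>R a \<in> inside PP \<and>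
          (p k + l *\<^sub>R e) + \<eta> *\<^sub>R c \<in> outside PP \<and> (p k + l *\<^sub>R e) - \<eta> *\<^sub>R c \<in> inside PP"
          using pts[OF k l] dd ee aa cc by simp
        have e3: "\<forall>\<^sub>F \<eta> in at_right 0. \<eta> * \<bar>a \<bullet> c\<bar> < l * (d \<bullet> c)" using l dc by (intro ev_small) (simp add: mult_pos_neg)
        have e4: "\<forall>\<^sub>F \<eta> in at_right 0. \<eta> * \<bar>a \<bullet> c\<bar> < l * (e \<bullet> a)" using l ea by (intro ev_small) (simp add: mult_pos_neg)
        show ?thesis using eventually_conj[OF eventually_conj[OF eventually_conj[OF ev_pos e3] e4] e1] .
      qed
      show "\<forall>\<^sub>F \<eta> in at_right 0.
       (p k - l *\<^sub>R d) + \<eta> *\<^sub>R a \<in> outside PP \<and> (p k + l *\<^sub>R e) - \<eta> *\<^sub>R c \<in> inside PP \<and>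
       ((p k - l *\<^sub>R d) + \<eta> *\<^sub>R a - p k) \<bullet> a > 0 \<and> ((p k - l *\<^sub>R d) + \<eta> *\<^sub>R a - p k) \<bullet> - c > 0 \<and>
       ((p k + l *\<^sub>R e) - \<eta> *\<^sub>R c - p k) \<bullet> a > 0 \<and> ((p k + l *\<^sub>R e) - \<eta> *\<^sub>R c - p k) \<bullet> - c > 0 \<and>
       norm ((p k - l *\<^sub>R d) + \<eta> *\<^sub>R a - p k) \<le> l * (norm d + norm e) + \<eta> \<and>
       norm ((p k + l *\<^sub>R e) - \<eta> *\<^sub>R c - p k) \<le> l * (norm d + norm e) + \<eta>"
      proof (rule eventually_mono[OF ev], elim conjE)
        fix \<eta> :: real assume h: "0 < \<eta>" "\<eta> * \<bar>a \<bullet> c\<bar> < l * (d \<bullet> c)" "\<eta> * \<bar>a \<bullet> c\<bar> < l * (e \<bullet> a)"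
          "(p k - l *\<^sub>R d) + \<eta> *\<^sub>R a \<in> outside PP" "(p k + l *\<^sub>R e) - \<eta> *\<^sub>R c \<in> inside PP"
        have x: "(p k - l *\<^sub>R d) + \<eta> *\<^sub>R a - p k = \<eta> *\<^sub>R a - l *\<^sub>R d" by simp
        have y: "(p k + l *\<^sub>R e) - \<eta> *\<^sub>R c - p k = l *\<^sub>R e - \<eta> *\<^sub>R c" by simp
        have i1: "(\<eta> *\<^sub>R a - l *\<^sub>R d) \<bullet> a = \<eta>" using ad a2 by (simp add: inner_diff_left inner_commute[of d a])
        have i2: "(\<eta> *\<^sub>R a - l *\<^sub>R d) \<bullet> - c = l * (d \<bullet> c) - \<eta> * (a \<bullet> c)" by (simp add: inner_diff_left)
        have i3: "(l *\<^sub>R e - \<eta> *\<^sub>R c) \<bullet> a = l * (e \<bullet> a) - \<eta> * (a \<bullet> c)" by (simp add: inner_diff_left inner_commute[of c a])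
        have i4: "(l *\<^sub>R e - \<eta> *\<^sub>R c) \<bullet> - c = \<eta>" using ce c2 by (simp add: inner_diff_left inner_commute[of e c])
        show "(p k - l *\<^sub>R d) + \<eta> *\<^sub>R a \<in> outside PP \<and> (p k + l *\<^sub>R e) - \<eta> *\<^sub>R c \<in> inside PP \<and>
       ((p k - l *\<^sub>R d) + \<eta> *\<^sub>R a - p k) \<bullet> a > 0 \<and> ((p k - l *\<^sub>R d) + \<eta> *\<^sub>R a - p k) \<bullet> - c > 0 \<and>
       ((p k + l *\<^sub>R e) - \<eta> *\<^sub>R c - p k) \<bullet> a > 0 \<and> ((p k + l *\<^sub>R e) - \<eta> *\<^sub>R c - p k) \<bullet> - c > 0 \<and>
       norm ((p k - l *\<^sub>R d) + \<eta> *\<^sub>R a - p k) \<le> l * (norm d + norm e) + \<eta> \<and>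
       norm ((p k + l *\<^sub>R e) - \<eta> *\<^sub>R c - p k) \<le> l * (norm d + norm e) + \<eta>"
          unfolding x y i1 i2 i3 i4
          using h ab[OF h(1) h(2)] ab[OF h(1) h(3)] Xn[OF h(1) l(1) na] Xn[OF h(1) l(1) nc, of e]
          by (simp add: norm_minus_commute[of "l *\<^sub>R e"])
      qed
    qed
  qed

  show "e \<bullet> a < 0 \<Longrightarrow> d \<bullet> c > 0"
  proof (rule ccontr)
    assume ea: "e \<bullet> a < 0" and "\<not> d \<bullet> c > 0"
    then have dc: "d \<bullet> c < 0" using C4 by fastforce
    show False
    proof (rule vertex_contra[OF k, of "-a" c "\<lambda>l \<eta>. (p k + l *\<^sub>R e) + \<eta> *\<^sub>R c"
          "\<lambda>l \<eta>. (p k - l *\<^sub>R d) - \<eta> *\<^sub>R a" "norm d + norm e"])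
      show "- a \<bullet> (p k - p (k - 1)) = 0 \<or> c \<bullet> (p k - p (k - 1)) = 0" using ad dd by simp
      show "- a \<bullet> (p (Suc k) - p k) = 0 \<or> c \<bullet> (p (Suc k) - p k) = 0" using ce ee by simp
    next
      fix l :: real assume l: "0 < l" "l < 1"
      have ev: "\<forall>\<^sub>F \<eta> in at_right 0. ((0 < \<eta> \<and> \<eta> * \<bar>a \<bullet> c\<bar> < l * (- (d \<bullet> c))) \<and> \<eta> * \<bar>a \<bullet> c\<bar> < l * (- (e \<bullet> a))) \<and>
         ((p k - l *\<^sub>R d) + \<eta> *\<^sub>R a \<in> outside PP \<and> (p k - l *\<^sub>R d) - \<eta> *\<^sub>R a \<in> inside PP \<and>
          (p k + l *\<^sub>R e) + \<eta> *\<^sub>R c \<in> outside PP \<and> (p k + l *\<^sub>R e) - \<eta> *\<^sub>R c \<in> inside PP)"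
      proof -
        have e1: "\<forall>\<^sub>F \<eta> in at_right 0. (p k - l *\<^sub>R d) + \<eta> *\<^sub>R a \<in> outside PP \<and> (p k - l *\<^sub>R d) - \<eta> *\<^sub>R a \<in> inside PP \<and>
          (p k + l *\<^sub>R e) + \<eta> *\<^sub>R c \<in> outside PP \<and> (p k + l *\<^sub>R e) - \<eta> *\<^sub>R c \<in> inside PP"
          using pts[OF k l] dd ee aa cc by simp
        have e3: "\<forall>\<^sub>F \<eta> in at_right 0. \<eta> * \<bar>a \<bullet> c\<bar> < l * (- (d \<bullet> c))" using l dc by (intro ev_small) (simp add: mult_pos_neg)
        have e4: "\<forall>\<^sub>F \<eta> in at_right 0. \<eta> * \<bar>a \<bullet> c\<bar> < l * (- (e \<bullet> a))" using l ea by (intro ev_small) (simp add: mult_pos_neg)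
        show ?thesis using eventually_conj[OF eventually_conj[OF eventually_conj[OF ev_pos e3] e4] e1] .
      qed
      show "\<forall>\<^sub>F \<eta> in at_right 0.
       (p k + l *\<^sub>R e) + \<eta> *\<^sub>R c \<in> outside PP \<and> (p k - l *\<^sub>R d) - \<eta> *\<^sub>R a \<in> inside PP \<and>
       ((p k + l *\<^sub>R e) + \<eta> *\<^sub>R c - p k) \<bullet> - a > 0 \<and> ((p k + l *\<^sub>R e) + \<eta> *\<^sub>R c - p k) \<bullet> c > 0 \<and>
       ((p k - l *\<^sub>R d) - \<eta> *\<^sub>R a - p k) \<bullet> - a > 0 \<and> ((p k - l *\<^sub>R d) - \<eta> *\<^sub>R a - p k) \<bullet> c > 0 \<and>
       norm ((p k + l *\<^sub>R e) + \<eta> *\<^sub>R c - p k) \<le> l * (norm d + norm e) + \<eta> \<and>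
       norm ((p k - l *\<^sub>R d) - \<eta> *\<^sub>R a - p k) \<le> l * (norm d + norm e) + \<eta>"
      proof (rule eventually_mono[OF ev], elim conjE)
        fix \<eta> :: real assume h: "0 < \<eta>" "\<eta> * \<bar>a \<bullet> c\<bar> < l * (- (d \<bullet> c))" "\<eta> * \<bar>a \<bullet> c\<bar> < l * (- (e \<bullet> a))"
          "(p k - l *\<^sub>R d) - \<eta> *\<^sub>R a \<in> inside PP" "(p k + l *\<^sub>R e) + \<eta> *\<^sub>R c \<in> outside PP"
        have x: "(p k + l *\<^sub>R e) + \<eta> *\<^sub>R c - p k = l *\<^sub>R e + \<eta> *\<^sub>R c" by simp
        have y: "(p k - l *\<^sub>R d) - \<eta> *\<^sub>R a - p k = - (l *\<^sub>R d + \<eta> *\<^sub>R a)" by simp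
        have i1: "(l *\<^sub>R e + \<eta> *\<^sub>R c) \<bullet> - a = - (l * (e \<bullet> a)) - \<eta> * (a \<bullet> c)"
          by (simp add: inner_add_left inner_commute[of c a])
        have i2: "(l *\<^sub>R e + \<eta> *\<^sub>R c) \<bullet> c = \<eta>" using ce c2 by (simp add: inner_add_left inner_commute[of e c])
        have i3: "(- (l *\<^sub>R d + \<eta> *\<^sub>R a)) \<bullet> - a = \<eta>" using ad a2 by (simp add: inner_add_left inner_diff_left inner_commute[of d a])
        have i4: "(- (l *\<^sub>R d + \<eta> *\<^sub>R a)) \<bullet> c = - (l * (d \<bullet> c)) - \<eta> * (a \<bullet> c)"
          by (simp add: inner_add_left inner_diff_left)
        show "(p k + l *\<^sub>R e) + \<eta> *\<^sub>R c \<in> outside PP \<and> (p k - l *\<^sub>R d) - \<eta> *\<^sub>R a \<in> inside PP \<and>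
       ((p k + l *\<^sub>R e) + \<eta> *\<^sub>R c - p k) \<bullet> - a > 0 \<and> ((p k + l *\<^sub>R e) + \<eta> *\<^sub>R c - p k) \<bullet> c > 0 \<and>
       ((p k - l *\<^sub>R d) - \<eta> *\<^sub>R a - p k) \<bullet> - a > 0 \<and> ((p k - l *\<^sub>R d) - \<eta> *\<^sub>R a - p k) \<bullet> c > 0 \<and>
       norm ((p k + l *\<^sub>R e) + \<eta> *\<^sub>R c - p k) \<le> l * (norm d + norm e) + \<eta> \<and>
       norm ((p k - l *\<^sub>R d) - \<eta> *\<^sub>R a - p k) \<le> l * (norm d + norm e) + \<eta>"
          unfolding x y i1 i2 i3 i4 norm_minus_cancel
          using h ab[OF h(1) h(2)] ab[OF h(1) h(3)] Xn2[OF h(1) l(1) na, of d] Xn2[OF h(1) l(1) nc, of e]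
          by simp
      qed
    qed
  qed
  show "a \<bullet> c > -1"
  proof (rule ccontr)
    assume "\<not> a \<bullet> c > -1"
    then have acm: "a \<bullet> c = -1" using acb by linarith
    have "(a + c) \<bullet> (a + c) = 0"
      by (simp add: inner_add_left inner_add_right inner_commute[of c a] a2 c2 acm)
    then have "a + c = 0" by simp
    then have cma: "c = - a" by (metis neg_eq_iff_add_eq_0)
    have ea0: "e \<bullet> a = 0" using ce cma by (simp add: inner_commute)
    show False
    proof (rule vertex_contra[OF k, of a a "\<lambda>l \<eta>. (p k - l *\<^sub>R d) + \<eta> *\<^sub>R a"
          "\<lambda>l \<eta>. (p k + l *\<^sub>R e) - \<eta> *\<^sub>R c" "norm d + norm e"])
      show "a \<bullet> (p k - p (k - 1)) = 0 \<or> a \<bullet> (p k - p (k - 1)) = 0" using ad dd by simp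
      show "a \<bullet> (p (Suc k) - p k) = 0 \<or> a \<bullet> (p (Suc k) - p k) = 0" using ea0 ee by (simp add: inner_commute)
    next
      fix l :: real assume l: "0 < l" "l < 1"
      have ev: "\<forall>\<^sub>F \<eta> in at_right 0. 0 < \<eta> \<and>
         ((p k - l *\<^sub>R d) + \<eta> *\<^sub>R a \<in> outside PP \<and> (p k - l *\<^sub>R d) - \<eta> *\<^sub>R a \<in> inside PP \<and>
          (p k + l *\<^sub>R e) + \<eta> *\<^sub>R c \<in> outside PP \<and> (p k + l *\<^sub>R e) - \<eta> *\<^sub>R c \<in> inside PP)"
      proof -
        have e1: "\<forall>\<^sub>F \<eta> in at_right 0. (p k - l *\<^sub>R d) + \<eta> *\<^sub>R a \<in> outside PP \<and> (p k - l *\<^sub>R d) - \<eta> *\<^sub>R a \<in> inside PP \<and>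
          (p k + l *\<^sub>R e) + \<eta> *\<^sub>R c \<in> outside PP \<and> (p k + l *\<^sub>R e) - \<eta> *\<^sub>R c \<in> inside PP"
          using pts[OF k l] dd ee aa cc by simp
        show ?thesis using eventually_conj[OF ev_pos e1] .
      qed
      show "\<forall>\<^sub>F \<eta> in at_right 0.
       (p k - l *\<^sub>R d) + \<eta> *\<^sub>R a \<in> outside PP \<and> (p k + l *\<^sub>R e) - \<eta> *\<^sub>R c \<in> inside PP \<and>
       ((p k - l *\<^sub>R d) + \<eta> *\<^sub>R a - p k) \<bullet> a > 0 \<and> ((p k - l *\<^sub>R d) + \<eta> *\<^sub>R a - p k) \<bullet> a > 0 \<and>
       ((p k + l *\<^sub>R e) - \<eta> *\<^sub>R c - p k) \<bullet> a > 0 \<and> ((p k + l *\<^sub>R e) - \<eta> *\<^sub>R c - p k) \<bullet> a > 0 \<and>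
       norm ((p k - l *\<^sub>R d) + \<eta> *\<^sub>R a - p k) \<le> l * (norm d + norm e) + \<eta> \<and>
       norm ((p k + l *\<^sub>R e) - \<eta> *\<^sub>R c - p k) \<le> l * (norm d + norm e) + \<eta>"
      proof (rule eventually_mono[OF ev], elim conjE)
        fix \<eta> :: real assume h: "0 < \<eta>"
          "(p k - l *\<^sub>R d) + \<eta> *\<^sub>R a \<in> outside PP" "(p k + l *\<^sub>R e) - \<eta> *\<^sub>R c \<in> inside PP"
        have x: "(p k - l *\<^sub>R d) + \<eta> *\<^sub>R a - p k = \<eta> *\<^sub>R a - l *\<^sub>R d" by simp
        have y: "(p k + l *\<^sub>R e) - \<eta> *\<^sub>R c - p k = l *\<^sub>R e - \<eta> *\<^sub>R c" by simp
        have i1: "(\<eta> *\<^sub>R a - l *\<^sub>R d) \<bullet> a = \<eta>" using ad a2 by (simp add: inner_diff_left inner_commute[of d a])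
        have i3: "(l *\<^sub>R e - \<eta> *\<^sub>R c) \<bullet> a = \<eta>" using ea0 acm
          by (simp add: inner_diff_left inner_commute[of c a])
        show "(p k - l *\<^sub>R d) + \<eta> *\<^sub>R a \<in> outside PP \<and> (p k + l *\<^sub>R e) - \<eta> *\<^sub>R c \<in> inside PP \<and>
       ((p k - l *\<^sub>R d) + \<eta> *\<^sub>R a - p k) \<bullet> a > 0 \<and> ((p k - l *\<^sub>R d) + \<eta> *\<^sub>R a - p k) \<bullet> a > 0 \<and>
       ((p k + l *\<^sub>R e) - \<eta> *\<^sub>R c - p k) \<bullet> a > 0 \<and> ((p k + l *\<^sub>R e) - \<eta> *\<^sub>R c - p k) \<bullet> a > 0 \<and>
       norm ((p k - l *\<^sub>R d) + \<eta> *\<^sub>R a - p k) \<le> l * (norm d + norm e) + \<eta> \<and>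
       norm ((p k + l *\<^sub>R e) - \<eta> *\<^sub>R c - p k) \<le> l * (norm d + norm e) + \<eta>"
          unfolding x y i1 i3
          using h Xn[OF h(1) l(1) na] Xn[OF h(1) l(1) nc, of e]
          by (simp add: norm_minus_commute[of "l *\<^sub>R e"])
      qed
    qed
  qed
qed

end


lemma avoid_real:
  fixes A B C D F H \<epsilon> t l :: real
  assumes A: "A > 0" and B: "B > 0" and D: "D > 0" and e0: "\<epsilon> \<noteq> 0"
    and small: "\<bar>\<epsilon>\<bar> * \<bar>C\<bar> < \<bar>F\<bar> \<or> F = 0"
    and s1: "H > 0 \<Longrightarrow> F > 0" and s2: "H < 0 \<Longrightarrow> F < 0"
    and t: "0 \<le> t" "t \<le> 1" and l: "0 \<le> l"
    and eq1: "\<epsilon> * ((1 - t) * A + t * B) = l * H"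
    and eq2: "(1 - t) * F + \<epsilon> * ((1 - t) * C + t * D) = 0"
  shows False
proof -
  have S: "(1 - t) * A + t * B > 0"
  proof (cases "t = 1")
    case True then show ?thesis using B by simp
  next
    case False
    then have "(1 - t) * A > 0" using t A by simp
    moreover have "t * B \<ge> 0" using t B by simp
    ultimately show ?thesis by linarith
  qed
  have eq2': "(1 - t) * (F + \<epsilon> * C) + t * (\<epsilon> * D) = 0" using eq2 by (simp add: algebra_simps)
  have ec: "- (\<bar>\<epsilon>\<bar> * \<bar>C\<bar>) \<le> \<epsilon> * C" "\<epsilon> * C \<le> \<bar>\<epsilon>\<bar> * \<bar>C\<bar>"
    by (metis abs_ge_minus_self abs_mult minus_le_iff) (metis abs_ge_self abs_mult)
  show False
  proof (cases "\<epsilon> > 0")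
    case True
    then have "l * H > 0" using eq1 S by (metis mult_pos_pos)
    then have "H > 0" using l by (metis mult_le_0_iff not_less order.strict_iff_not)
    then have F: "F > 0" using s1 by blast
    then have FC: "F + \<epsilon> * C > 0" using small ec by auto
    have "\<epsilon> * D > 0" using True D by simp
    show False
    proof (cases "t = 1")
      case True then show ?thesis using eq2' \<open>\<epsilon> * D > 0\<close> by auto
    next
      case False
      then have "(1 - t) * (F + \<epsilon> * C) > 0" using t FC by simp
      moreover have "t * (\<epsilon> * D) \<ge> 0" using t \<open>\<epsilon> * D > 0\<close> by simp
      ultimately show ?thesis using eq2' by linarith
    qed
  next
    case False
    then have en: "\<epsilon> < 0" using e0 by simp
    then have "l * H < 0" using eq1 S by (metis mult_neg_pos)
    then have "H < 0" using l by (metis mult_nonneg_nonneg not_less order.strict_iff_not less_le_not_le zero_le_mult_iff)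
    then have F: "F < 0" using s2 by blast
    then have FC: "F + \<epsilon> * C < 0" using small ec by auto
    have "\<epsilon> * D < 0" using en D by (simp add: mult_neg_pos)
    show False
    proof (cases "t = 1")
      case True then show ?thesis using eq2' \<open>\<epsilon> * D < 0\<close> by auto
    next
      case False
      then have "(1 - t) * (F + \<epsilon> * C) < 0" using t FC by (simp add: mult_pos_neg)
      moreover have "t * (\<epsilon> * D) \<le> 0" using t \<open>\<epsilon> * D < 0\<close> by (simp add: mult_nonneg_nonpos)
      ultimately show ?thesis using eq2' by linarith
    qed
  qed
qed

lemma avoid:
  fixes q f h nE nA z0 z1 :: "real^2" and \<epsilon> t l :: real
  assumes "f \<bullet> nE = 0" "h \<bullet> nA = 0" "h \<bullet> nE > 0 \<Longrightarrow> f \<bullet> nA > 0" "h \<bullet> nE < 0 \<Longrightarrow> f \<bullet> nA < 0"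
    "z0 \<bullet> nE > 0" "z1 \<bullet> nE > 0" "z1 \<bullet> nA > 0" "\<epsilon> \<noteq> 0"
    "\<bar>\<epsilon>\<bar> * \<bar>z0 \<bullet> nA\<bar> < \<bar>f \<bullet> nA\<bar> \<or> f \<bullet> nA = 0" "0 \<le> t" "t \<le> 1" "0 \<le> l"
  shows "q + (1 - t) *\<^sub>R f + \<epsilon> *\<^sub>R ((1 - t) *\<^sub>R z0 + t *\<^sub>R z1) \<noteq> q + l *\<^sub>R h"
proof
  assume "q + (1 - t) *\<^sub>R f + \<epsilon> *\<^sub>R ((1 - t) *\<^sub>R z0 + t *\<^sub>R z1) = q + l *\<^sub>R h"
  then have eq: "(1 - t) *\<^sub>R f + \<epsilon> *\<^sub>R ((1 - t) *\<^sub>R z0 + t *\<^sub>R z1) = l *\<^sub>R h" by simp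
  have 1: "\<epsilon> * ((1 - t) * (z0 \<bullet> nE) + t * (z1 \<bullet> nE)) = l * (h \<bullet> nE)"
    using arg_cong[OF eq, of "\<lambda>x. x \<bullet> nE"] assms(1) by (simp add: inner_add_left)
  have 2: "(1 - t) * (f \<bullet> nA) + \<epsilon> * ((1 - t) * (z0 \<bullet> nA) + t * (z1 \<bullet> nA)) = 0"
    using arg_cong[OF eq, of "\<lambda>x. x \<bullet> nA"] assms(2) by (simp add: inner_add_left)
  show False
    by (rule avoid_real[OF assms(5,6,7,8,9,3,4,10,11,12) 1 2])
qed



context spoly begin

lemma sep_edges:
  assumes K: "compact K" and disj: "\<forall>j. 1 \<le> j \<longrightarrow> j mod n \<notin> M \<longrightarrow> K \<inter> E j = {}"
  shows "\<exists>\<delta>>0. \<forall>y\<in>K. \<forall>x. dist y x < \<delta> \<longrightarrow> x \<in> PP \<longrightarrow> (\<exists>j\<ge>1. j mod n \<in> M \<and> x \<in> E j)"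
proof -
  define Oth where "Oth = \<Union> (E ` {j\<in>{1..n}. j mod n \<notin> M})"
  have "closed Oth" unfolding Oth_def polygon_edge_def by (intro closed_Union) auto
  moreover have "K \<inter> Oth = {}" unfolding Oth_def using disj by auto
  ultimately obtain \<delta> where \<delta>: "\<delta> > 0" "\<forall>y\<in>K. \<forall>x\<in>Oth. \<delta> \<le> dist y x"
    using separate_compact_closed[OF K] by blast
  have "\<exists>j\<ge>1. j mod n \<in> M \<and> x \<in> E j" if h: "y \<in> K" "dist y x < \<delta>" "x \<in> PP" for y x
  proof -
    obtain j where j: "1 \<le> j" "x \<in> E j" using h(3) PP_iff by blast
    show ?thesis
    proof (cases "j mod n \<in> M")
      case True then show ?thesis using j by blast
    next
      case False
      then have "x \<in> Oth" unfolding Oth_def using red_in[of j] red_mod[OF j(1)] E_red[OF j(1)] j(2)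
        by (intro UnionI[of "E (red j)"]) auto
      then show ?thesis using \<delta> h by force
    qed
  qed
  then show ?thesis using \<delta>(1) by blast
qed

lemma norm_comb: "0 \<le> t \<Longrightarrow> t \<le> 1 \<Longrightarrow> norm ((1 - t) *\<^sub>R v + t *\<^sub>R w) \<le> norm v + norm (w::real^2)"
proof -
  assume t: "0 \<le> t" "t \<le> 1"
  have "norm ((1 - t) *\<^sub>R v + t *\<^sub>R w) \<le> norm ((1 - t) *\<^sub>R v) + norm (t *\<^sub>R w)" by (rule norm_triangle_ineq)
  also have "\<dots> = (1 - t) * norm v + t * norm w" using t by simp
  also have "\<dots> \<le> norm v + norm w" using t
    by (smt (verit, ccfv_SIG) mult_left_le_one_le norm_ge_zero)
  finally show ?thesis .
qed


lemma pos_comb: "0 \<le> t \<Longrightarrow> t \<le> 1 \<Longrightarrow> (P::real) > 0 \<Longrightarrow> Q > 0 \<Longrightarrow> (1 - t) * P + t * Q > 0"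
  by (smt (verit) mult_nonneg_nonneg mult_pos_pos)

lemma small_div: "0 < (\<delta>::real) \<Longrightarrow> \<bar>\<epsilon>\<bar> < \<delta> / (N + 1) \<Longrightarrow> 0 \<le> N \<Longrightarrow> \<bar>\<epsilon>\<bar> * N < \<delta>"
proof -
  assume h: "0 < \<delta>" "\<bar>\<epsilon>\<bar> < \<delta> / (N + 1)" "0 \<le> N"
  then have "\<bar>\<epsilon>\<bar> * (N + 1) < \<delta>" by (simp add: field_simps)
  then show ?thesis using h by (smt (verit) abs_ge_zero mult_left_mono distrib_left mult.right_neutral)
qed

lemma partA_disj:
  assumes k: "1 \<le> k" and b: "b \<in> rel_interior (E k)" and v: "v \<bullet> u k > 0"
  shows "\<exists>\<epsilon>0>0. \<forall>\<epsilon>. \<epsilon> \<noteq> 0 \<longrightarrow> \<bar>\<epsilon>\<bar> < \<epsilon>0 \<longrightarrow>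
     closed_segment (b + \<epsilon> *\<^sub>R v) (p k + \<epsilon> *\<^sub>R (u k + u (Suc k))) \<inter> PP = {} \<and>
     closed_segment (b + \<epsilon> *\<^sub>R u k) (b + \<epsilon> *\<^sub>R v) \<inter> PP = {}"
proof -
  define q where "q = p k"
  define d where "d = p k - p (k - 1)"
  define e where "e = p (Suc k) - p k"
  define a where "a = u k"
  define c where "c = u (Suc k)"
  define w where "w = u k + u (Suc k)"
  note cs = consist[OF k d_def e_def a_def c_def]
  have ad: "a \<bullet> d = 0" using u_ext(2)[OF k] d_def a_def by simp
  have ec: "e \<bullet> c = 0" using u_ext(2)[of "Suc k"] e_def c_def by (simp add: inner_commute)
  have na: "norm a = 1" using u_ext(1)[OF k] a_def by simp
  have nc: "norm c = 1" using u_ext(1)[of "Suc k"] c_def by simp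
  have a2: "a \<bullet> a = 1" using na by (metis power2_norm_eq_inner power_one)
  have c2: "c \<bullet> c = 1" using nc by (metis power2_norm_eq_inner power_one)
  have va: "v \<bullet> a > 0" using v a_def by simp
  have ne: "p (k - 1) \<noteq> q" using pne[OF k] q_def by simp
  have bo: "b \<in> open_segment (p (k - 1)) q"
    using b ne unfolding polygon_edge_def rel_interior_closed_segment q_def by simp
  then obtain \<theta> where \<theta>: "0 < \<theta>" "\<theta> < 1" "b = (1 - \<theta>) *\<^sub>R p (k - 1) + \<theta> *\<^sub>R q"
    unfolding in_segment(2) by blast
  define f where "f = b - q"
  have f: "f = - ((1 - \<theta>) *\<^sub>R d)" by (simp add: f_def \<theta>(3) d_def q_def algebra_simps)
  have fa: "f \<bullet> a = 0" using ad by (simp add: f inner_commute[of d a])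
  have fc: "f \<bullet> c = - ((1 - \<theta>) * (d \<bullet> c))" by (simp add: f)
  have wa: "w \<bullet> a > 0" using cs(5) a2 by (simp add: w_def a_def c_def inner_add_left inner_commute[of "u (Suc k)"])
  have wc: "w \<bullet> c > 0" using cs(5) c2 by (simp add: w_def a_def c_def inner_add_left)
  have sg1: "f \<bullet> c > 0" if "e \<bullet> a > 0" using cs(1)[OF that] \<theta> fc by (simp add: mult_pos_neg)
  have sg2: "f \<bullet> c < 0" if "e \<bullet> a < 0" using cs(2)[OF that] \<theta> fc by (simp add: mult_pos_pos)
  have bE: "b \<in> E k" using b rel_interior_subset by blast
  have qE: "q \<in> E k" using p_in_E q_def by simp
  have K1: "\<forall>j. 1 \<le> j \<longrightarrow> j mod n \<notin> {k mod n, Suc k mod n} \<longrightarrow> closed_segment b q \<inter> E j = {}"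
  proof (intro allI impI)
    fix j assume j: "1 \<le> j" "j mod n \<notin> {k mod n, Suc k mod n}"
    have sub: "closed_segment b q \<subseteq> E k"
      using bE qE by (intro closed_segment_subset) (auto simp: polygon_edge_def)
    show "closed_segment b q \<inter> E j = {}"
    proof (rule ccontr)
      assume "closed_segment b q \<inter> E j \<noteq> {}"
      then obtain y where y: "y \<in> closed_segment b q" "y \<in> E j" by blast
      have kj: "k mod n \<noteq> j mod n" using j(2) by auto
      have "y \<in> E k \<inter> E j" using y sub by blast
      then have "y \<in> {p (k - 1), p k}" using simple_ext[OF k j(1) kj] by blast
      then show False
      proof
        assume "y = p (k - 1)"
        moreover have "dist y q \<le> dist b q" using dist_in_closed_segment[OF y(1)] by simp
        moreover have "dist b q < dist (p (k - 1)) q" using dist_in_open_segment[OF bo] by simp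
        ultimately show False by simp
      next
        assume "y \<in> {p k}"
        then show False using p_notin_E[OF j(1) k] j(2) y(2) by auto
      qed
    qed
  qed
  obtain \<delta>1 where \<delta>1: "\<delta>1 > 0" "\<forall>y\<in>closed_segment b q. \<forall>x. dist y x < \<delta>1 \<longrightarrow> x \<in> PP \<longrightarrow>
      (\<exists>j\<ge>1. j mod n \<in> {k mod n, Suc k mod n} \<and> x \<in> E j)"
    using sep_edges[OF compact_segment K1] by blast
  have K2: "\<forall>j. 1 \<le> j \<longrightarrow> j mod n \<notin> {k mod n} \<longrightarrow> {b} \<inter> E j = {}"
  proof (intro allI impI)
    fix j assume j: "1 \<le> j" "j mod n \<notin> {k mod n}"
    have "b \<notin> E j"
    proof
      assume "b \<in> E j"
      have kj: "k mod n \<noteq> j mod n" using j(2) by auto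
      have "b \<in> E k \<inter> E j" using \<open>b \<in> E j\<close> bE by blast
      then have "b \<in> {p (k - 1), p k}" using simple_ext[OF k j(1) kj] by blast
      then show False using bo q_def by (auto simp: open_segment_def)
    qed
    then show "{b} \<inter> E j = {}" by simp
  qed
  obtain \<delta>2 where \<delta>2: "\<delta>2 > 0" "\<forall>y\<in>{b}. \<forall>x. dist y x < \<delta>2 \<longrightarrow> x \<in> PP \<longrightarrow>
      (\<exists>j\<ge>1. j mod n \<in> {k mod n} \<and> x \<in> E j)"
    using sep_edges[OF compact_sing K2] by blast
  define \<epsilon>0 where "\<epsilon>0 = min (\<delta>1 / (norm v + norm w + 1)) (min (\<delta>2 / (norm a + norm v + 1))
      (if f \<bullet> c = 0 then 1 else \<bar>f \<bullet> c\<bar> / (\<bar>v \<bullet> c\<bar> + 1)))"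
  have p1: "norm v + norm w + 1 > 0" "norm a + norm v + 1 > 0" "\<bar>v \<bullet> c\<bar> + 1 > 0"
    by (simp_all add: add_nonneg_pos add_pos_nonneg)
  have \<epsilon>0: "\<epsilon>0 > 0" unfolding \<epsilon>0_def using \<delta>1(1) \<delta>2(1) p1 by (simp add: divide_pos_pos)
  have main: "closed_segment (b + \<epsilon> *\<^sub>R v) (p k + \<epsilon> *\<^sub>R (u k + u (Suc k))) \<inter> PP = {} \<and>
     closed_segment (b + \<epsilon> *\<^sub>R u k) (b + \<epsilon> *\<^sub>R v) \<inter> PP = {}"
    if e0: "\<epsilon> \<noteq> 0" and eb: "\<bar>\<epsilon>\<bar> < \<epsilon>0" for \<epsilon>
  proof -
    have sm1: "\<bar>\<epsilon>\<bar> * (norm v + norm w) < \<delta>1"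
      using eb \<delta>1(1) by (intro small_div) (auto simp: \<epsilon>0_def)
    have sm2: "\<bar>\<epsilon>\<bar> * (norm a + norm v) < \<delta>2"
      using eb \<delta>2(1) by (intro small_div) (auto simp: \<epsilon>0_def)
    have sm3: "\<bar>\<epsilon>\<bar> * \<bar>v \<bullet> c\<bar> < \<bar>f \<bullet> c\<bar> \<or> f \<bullet> c = 0"
    proof (cases "f \<bullet> c = 0")
      case False
      then have "\<bar>\<epsilon>\<bar> < \<bar>f \<bullet> c\<bar> / (\<bar>v \<bullet> c\<bar> + 1)" using eb by (simp add: \<epsilon>0_def)
      then have "\<bar>\<epsilon>\<bar> * \<bar>v \<bullet> c\<bar> < \<bar>f \<bullet> c\<bar>" using False by (intro small_div) auto
      then show ?thesis by simp
    qed simp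
    have S1: "x \<notin> PP" if x: "x \<in> closed_segment (b + \<epsilon> *\<^sub>R v) (q + \<epsilon> *\<^sub>R w)" for x
    proof
      assume xP: "x \<in> PP"
      obtain t where t: "0 \<le> t" "t \<le> 1" "x = (1 - t) *\<^sub>R (b + \<epsilon> *\<^sub>R v) + t *\<^sub>R (q + \<epsilon> *\<^sub>R w)"
        using x unfolding in_segment by blast
      define y where "y = (1 - t) *\<^sub>R b + t *\<^sub>R q"
      define z where "z = (1 - t) *\<^sub>R v + t *\<^sub>R w"
      have yK: "y \<in> closed_segment b q" unfolding y_def in_segment using t by blast
      have xy: "x = y + \<epsilon> *\<^sub>R z" by (simp add: t(3) y_def z_def algebra_simps)
      have xq: "x = q + (1 - t) *\<^sub>R f + \<epsilon> *\<^sub>R ((1 - t) *\<^sub>R v + t *\<^sub>R w)"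
        by (simp add: t(3) f_def algebra_simps)
      have "dist y x = \<bar>\<epsilon>\<bar> * norm z" by (simp add: xy dist_norm)
      also have "\<dots> \<le> \<bar>\<epsilon>\<bar> * (norm v + norm w)"
        unfolding z_def using t by (intro mult_left_mono norm_comb) auto
      finally have "dist y x < \<delta>1" using sm1 by linarith
      then obtain j where j: "1 \<le> j" "j mod n \<in> {k mod n, Suc k mod n}" "x \<in> E j"
        using \<delta>1(2) yK xP by blast
      show False
      proof (cases "j mod n = k mod n")
        case True
        then have "x \<in> E k" using E_eq[OF j(1) k] j(3) by simp
        then obtain l where "x = p k - l *\<^sub>R (p k - p (k - 1))" using E_param by blast
        then have "x - q = - (l *\<^sub>R d)" by (simp add: q_def d_def)
        then have "(x - q) \<bullet> a = 0" using ad by (simp add: inner_commute[of d a])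
        moreover have "(x - q) \<bullet> a = \<epsilon> * ((1 - t) * (v \<bullet> a) + t * (w \<bullet> a))"
          using fa by (simp add: xq inner_add_left)
        moreover have "(1 - t) * (v \<bullet> a) + t * (w \<bullet> a) > 0" using pos_comb[OF t(1,2) va wa] .
        ultimately show False using e0 by simp
      next
        case False
        then have "x \<in> E (Suc k)" using E_eq[OF j(1), of "Suc k"] j by auto
        then obtain l where l: "0 \<le> l" "x = p k + l *\<^sub>R (p (Suc k) - p k)" using E_param2 by blast
        have "x \<noteq> q + l *\<^sub>R e"
          unfolding xq
          by (rule avoid[OF fa ec sg1 sg2 va wa wc e0 sm3 t(1,2) l(1)])
        then show False using l q_def e_def by simp
      qed
    qed
    have S2: "x \<notin> PP" if x: "x \<in> closed_segment (b + \<epsilon> *\<^sub>R a) (b + \<epsilon> *\<^sub>R v)" for x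
    proof
      assume xP: "x \<in> PP"
      obtain s where s: "0 \<le> s" "s \<le> 1" "x = (1 - s) *\<^sub>R (b + \<epsilon> *\<^sub>R a) + s *\<^sub>R (b + \<epsilon> *\<^sub>R v)"
        using x unfolding in_segment by blast
      define z where "z = (1 - s) *\<^sub>R a + s *\<^sub>R v"
      have xb: "x = b + \<epsilon> *\<^sub>R z" by (simp add: s(3) z_def algebra_simps)
      have "dist b x = \<bar>\<epsilon>\<bar> * norm z" by (simp add: xb dist_norm)
      also have "\<dots> \<le> \<bar>\<epsilon>\<bar> * (norm a + norm v)"
        unfolding z_def using s by (intro mult_left_mono norm_comb) auto
      finally have "dist b x < \<delta>2" using sm2 by linarith
      then obtain j where j: "1 \<le> j" "j mod n \<in> {k mod n}" "x \<in> E j"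
        using \<delta>2(2) xP by blast
      then have "x \<in> E k" using E_eq[OF j(1) k] by simp
      then obtain l where "x = p k - l *\<^sub>R (p k - p (k - 1))" using E_param by blast
      then have "x - q = - (l *\<^sub>R d)" by (simp add: q_def d_def)
        then have "(x - q) \<bullet> a = 0" using ad by (simp add: inner_commute[of d a])
      moreover have "(x - q) \<bullet> a = \<epsilon> * ((1 - s) * (a \<bullet> a) + s * (v \<bullet> a))"
      proof -
        have "x - q = f + \<epsilon> *\<^sub>R z" by (simp add: xb f_def)
        then show ?thesis using fa by (simp add: z_def inner_add_left)
      qed
      moreover have "(1 - s) * (a \<bullet> a) + s * (v \<bullet> a) > 0" using pos_comb[OF s(1,2) _ va, of 1] a2 by simp
      ultimately show False using e0 by simp
    qed
    show ?thesis using S1 S2 by (auto simp: q_def w_def a_def)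
  qed
  show ?thesis using \<epsilon>0 main by blast
qed


lemma partA:
  assumes k: "1 \<le> k" and b: "b \<in> rel_interior (E k)" and v: "v \<bullet> u k > 0"
  shows "\<forall>\<^sub>F \<epsilon> in at_right 0.
     closed_segment (b + \<epsilon> *\<^sub>R v) (p k + \<epsilon> *\<^sub>R (u k + u (Suc k))) \<subseteq> outside PP \<and>
     closed_segment (b + (-\<epsilon>) *\<^sub>R v) (p k + (-\<epsilon>) *\<^sub>R (u k + u (Suc k))) \<subseteq> inside PP"
proof -
  obtain \<epsilon>0 where \<epsilon>0: "\<epsilon>0 > 0" and D: "\<And>\<epsilon>. \<epsilon> \<noteq> 0 \<Longrightarrow> \<bar>\<epsilon>\<bar> < \<epsilon>0 \<Longrightarrow>
     closed_segment (b + \<epsilon> *\<^sub>R v) (p k + \<epsilon> *\<^sub>R (u k + u (Suc k))) \<inter> PP = {} \<and>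
     closed_segment (b + \<epsilon> *\<^sub>R u k) (b + \<epsilon> *\<^sub>R v) \<inter> PP = {}"
    using partA_disj[OF k b v] by blast
  have ev: "\<forall>\<^sub>F \<epsilon> in at_right 0. (0 < \<epsilon> \<and> \<epsilon> * 1 < \<epsilon>0) \<and>
     (b + \<epsilon> *\<^sub>R u k \<in> outside PP \<and> b - \<epsilon> *\<^sub>R u k \<in> inside PP)"
    using eventually_conj[OF eventually_conj[OF ev_pos ev_small[OF \<epsilon>0]] u_ext(3)[OF k b]] .
  have conn: "connected (closed_segment (b + \<epsilon> *\<^sub>R u k) (b + \<epsilon> *\<^sub>R v) \<union>
      closed_segment (b + \<epsilon> *\<^sub>R v) (p k + \<epsilon> *\<^sub>R (u k + u (Suc k))))" for \<epsilon>
    by (rule connected_Un) auto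
  show ?thesis
  proof (rule eventually_mono[OF ev], elim conjE)
    fix \<epsilon> :: real assume h: "0 < \<epsilon>" "\<epsilon> * 1 < \<epsilon>0" "b + \<epsilon> *\<^sub>R u k \<in> outside PP" "b - \<epsilon> *\<^sub>R u k \<in> inside PP"
    have D1: "closed_segment (b + \<epsilon> *\<^sub>R v) (p k + \<epsilon> *\<^sub>R (u k + u (Suc k))) \<inter> PP = {} \<and>
     closed_segment (b + \<epsilon> *\<^sub>R u k) (b + \<epsilon> *\<^sub>R v) \<inter> PP = {}" using D[of \<epsilon>] h by simp
    have D2: "closed_segment (b + (-\<epsilon>) *\<^sub>R v) (p k + (-\<epsilon>) *\<^sub>R (u k + u (Suc k))) \<inter> PP = {} \<and>
     closed_segment (b + (-\<epsilon>) *\<^sub>R u k) (b + (-\<epsilon>) *\<^sub>R v) \<inter> PP = {}" using D[of "-\<epsilon>"] h by simp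
    have "closed_segment (b + \<epsilon> *\<^sub>R u k) (b + \<epsilon> *\<^sub>R v) \<union>
      closed_segment (b + \<epsilon> *\<^sub>R v) (p k + \<epsilon> *\<^sub>R (u k + u (Suc k))) \<subseteq> outside PP"
      by (rule conn_out[OF conn]) (use D1 h in auto)
    moreover have "closed_segment (b + (-\<epsilon>) *\<^sub>R u k) (b + (-\<epsilon>) *\<^sub>R v) \<union>
      closed_segment (b + (-\<epsilon>) *\<^sub>R v) (p k + (-\<epsilon>) *\<^sub>R (u k + u (Suc k))) \<subseteq> inside PP"
      by (rule conn_in[OF conn]) (use D2 h in auto)
    ultimately show "closed_segment (b + \<epsilon> *\<^sub>R v) (p k + \<epsilon> *\<^sub>R (u k + u (Suc k))) \<subseteq> outside PP \<and>
     closed_segment (b + (-\<epsilon>) *\<^sub>R v) (p k + (-\<epsilon>) *\<^sub>R (u k + u (Suc k))) \<subseteq> inside PP"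
      by blast
  qed
qed


lemma partB_disj:
  assumes k: "1 \<le> k"
  shows "\<exists>\<epsilon>0>0. \<forall>\<epsilon>. \<epsilon> \<noteq> 0 \<longrightarrow> \<bar>\<epsilon>\<bar> < \<epsilon>0 \<longrightarrow>
     closed_segment (p k + \<epsilon> *\<^sub>R (u k + u (Suc k))) (p (Suc k) + \<epsilon> *\<^sub>R (u (Suc k) + u (Suc (Suc k)))) \<inter> PP = {}"
proof -
  define q where "q = p k"
  define q' where "q' = p (Suc k)"
  define d where "d = p k - p (k - 1)"
  define e where "e = p (Suc k) - p k"
  define e' where "e' = p (Suc (Suc k)) - p (Suc k)"
  define a where "a = u k"
  define c where "c = u (Suc k)"
  define g where "g = u (Suc (Suc k))"
  define w where "w = a + c"
  define w' where "w' = c + g"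
  have k1: "1 \<le> Suc k" by simp
  note cs = consist[OF k d_def e_def a_def c_def]
  have cs': "e' \<bullet> c > 0 \<Longrightarrow> e \<bullet> g < 0" "e' \<bullet> c < 0 \<Longrightarrow> e \<bullet> g > 0" "c \<bullet> g > -1"
    using consist[OF k1 _ e'_def c_def g_def, of e] e_def by simp_all
  have ad: "a \<bullet> d = 0" using u_ext(2)[OF k] d_def a_def by simp
  have ce: "c \<bullet> e = 0" using u_ext(2)[of "Suc k"] e_def c_def by simp
  have ge: "g \<bullet> e' = 0" using u_ext(2)[of "Suc (Suc k)"] e'_def g_def by simp
  have a2: "a \<bullet> a = 1" using u_ext(1)[OF k] a_def by (metis power2_norm_eq_inner power_one)
  have c2: "c \<bullet> c = 1" using u_ext(1)[OF k1] c_def by (metis power2_norm_eq_inner power_one)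
  have g2: "g \<bullet> g = 1" using u_ext(1)[of "Suc (Suc k)"] g_def by (simp add: power2_norm_eq_inner[symmetric])
  have wc: "w \<bullet> c > 0" using cs(5) c2 by (simp add: w_def inner_add_left)
  have wa: "w \<bullet> a > 0" using cs(5) a2 by (simp add: w_def inner_add_left inner_commute[of c a])
  have w'c: "w' \<bullet> c > 0" using cs'(3) c2 by (simp add: w'_def inner_add_left inner_commute[of g c])
  have w'g: "w' \<bullet> g > 0" using cs'(3) g2 by (simp add: w'_def inner_add_left)
  have sA1: "e \<bullet> a > 0" if "(- d) \<bullet> c > 0"
    using that cs(2) cs(3) by (cases "e \<bullet> a < 0"; cases "e \<bullet> a = 0") auto
  have sA2: "e \<bullet> a < 0" if "(- d) \<bullet> c < 0"
    using that cs(1) cs(3) by (cases "e \<bullet> a > 0"; cases "e \<bullet> a = 0") auto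
  have sB1: "(- e) \<bullet> g > 0" if "e' \<bullet> c > 0" using cs'(1)[OF that] by simp
  have sB2: "(- e) \<bullet> g < 0" if "e' \<bullet> c < 0" using cs'(2)[OF that] by simp
  have ec: "e \<bullet> c = 0" using ce by (simp add: inner_commute)
  have da: "(- d) \<bullet> a = 0" using ad by (simp add: inner_commute)
  have ec': "(- e) \<bullet> c = 0" using ec by simp
  have K: "\<forall>j. 1 \<le> j \<longrightarrow> j mod n \<notin> {k mod n, Suc k mod n, Suc (Suc k) mod n} \<longrightarrow> closed_segment q q' \<inter> E j = {}"
  proof (intro allI impI)
    fix j assume j: "1 \<le> j" "j mod n \<notin> {k mod n, Suc k mod n, Suc (Suc k) mod n}"
    have kj: "Suc k mod n \<noteq> j mod n" using j(2) by auto
    have "closed_segment q q' = E (Suc k)" by (simp add: polygon_edge_def q_def q'_def)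
    moreover have "E (Suc k) \<inter> E j \<subseteq> {p k, p (Suc k)}" using simple_ext[OF k1 j(1) kj] by simp
    moreover have "p k \<notin> E j" using p_notin_E[OF j(1) k] j(2) by auto
    moreover have "p (Suc k) \<notin> E j" using p_notin_E[OF j(1) k1] j(2) by auto
    ultimately show "closed_segment q q' \<inter> E j = {}" by blast
  qed
  obtain \<delta> where \<delta>: "\<delta> > 0" "\<forall>y\<in>closed_segment q q'. \<forall>x. dist y x < \<delta> \<longrightarrow> x \<in> PP \<longrightarrow>
      (\<exists>j\<ge>1. j mod n \<in> {k mod n, Suc k mod n, Suc (Suc k) mod n} \<and> x \<in> E j)"
    using sep_edges[OF compact_segment K] by blast
  define \<epsilon>0 where "\<epsilon>0 = min (\<delta> / (norm w + norm w' + 1)) (min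
      (if e \<bullet> a = 0 then 1 else \<bar>e \<bullet> a\<bar> / (\<bar>w' \<bullet> a\<bar> + 1))
      (if e \<bullet> g = 0 then 1 else \<bar>e \<bullet> g\<bar> / (\<bar>w \<bullet> g\<bar> + 1)))"
  have p1: "norm w + norm w' + 1 > 0" "\<bar>w' \<bullet> a\<bar> + 1 > 0" "\<bar>w \<bullet> g\<bar> + 1 > 0"
    by (simp_all add: add_nonneg_pos add_pos_nonneg)
  have \<epsilon>0: "\<epsilon>0 > 0" unfolding \<epsilon>0_def using \<delta>(1) p1 by (simp add: divide_pos_pos)
  have main: "x \<notin> PP"
    if e0: "\<epsilon> \<noteq> 0" and eb: "\<bar>\<epsilon>\<bar> < \<epsilon>0" and x: "x \<in> closed_segment (q + \<epsilon> *\<^sub>R w) (q' + \<epsilon> *\<^sub>R w')" for \<epsilon> x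
  proof
    assume xP: "x \<in> PP"
    have sm1: "\<bar>\<epsilon>\<bar> * (norm w + norm w') < \<delta>"
      using eb \<delta>(1) by (intro small_div) (auto simp: \<epsilon>0_def)
    have sm2: "\<bar>\<epsilon>\<bar> * \<bar>w' \<bullet> a\<bar> < \<bar>e \<bullet> a\<bar> \<or> e \<bullet> a = 0"
    proof (cases "e \<bullet> a = 0")
      case False
      then have "\<bar>\<epsilon>\<bar> < \<bar>e \<bullet> a\<bar> / (\<bar>w' \<bullet> a\<bar> + 1)" using eb by (simp add: \<epsilon>0_def)
      then have "\<bar>\<epsilon>\<bar> * \<bar>w' \<bullet> a\<bar> < \<bar>e \<bullet> a\<bar>" using False by (intro small_div) auto
      then show ?thesis by simp
    qed simp
    have sm3: "\<bar>\<epsilon>\<bar> * \<bar>w \<bullet> g\<bar> < \<bar>(- e) \<bullet> g\<bar> \<or> (- e) \<bullet> g = 0"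
    proof (cases "e \<bullet> g = 0")
      case False
      then have "\<bar>\<epsilon>\<bar> < \<bar>e \<bullet> g\<bar> / (\<bar>w \<bullet> g\<bar> + 1)" using eb by (simp add: \<epsilon>0_def)
      then have "\<bar>\<epsilon>\<bar> * \<bar>w \<bullet> g\<bar> < \<bar>e \<bullet> g\<bar>" using False by (intro small_div) auto
      then show ?thesis by simp
    qed simp
    obtain s where s: "0 \<le> s" "s \<le> 1" "x = (1 - s) *\<^sub>R (q + \<epsilon> *\<^sub>R w) + s *\<^sub>R (q' + \<epsilon> *\<^sub>R w')"
      using x unfolding in_segment by blast
    define y where "y = (1 - s) *\<^sub>R q + s *\<^sub>R q'"
    define z where "z = (1 - s) *\<^sub>R w + s *\<^sub>R w'"
    have yK: "y \<in> closed_segment q q'" unfolding y_def in_segment using s by blast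
    have xy: "x = y + \<epsilon> *\<^sub>R z" by (simp add: s(3) y_def z_def algebra_simps)
    have x1: "x = q + (1 - (1 - s)) *\<^sub>R e + \<epsilon> *\<^sub>R ((1 - (1 - s)) *\<^sub>R w' + (1 - s) *\<^sub>R w)"
      by (simp add: s(3) e_def q_def q'_def algebra_simps)
    have x2: "x = q' + (1 - s) *\<^sub>R (- e) + \<epsilon> *\<^sub>R ((1 - s) *\<^sub>R w + s *\<^sub>R w')"
      by (simp add: s(3) e_def q_def q'_def algebra_simps)
    have "dist y x = \<bar>\<epsilon>\<bar> * norm z" by (simp add: xy dist_norm)
    also have "\<dots> \<le> \<bar>\<epsilon>\<bar> * (norm w + norm w')"
      unfolding z_def using s by (intro mult_left_mono norm_comb) auto
    finally have "dist y x < \<delta>" using sm1 by linarith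
    then obtain j where j: "1 \<le> j" "j mod n \<in> {k mod n, Suc k mod n, Suc (Suc k) mod n}" "x \<in> E j"
      using \<delta>(2) yK xP by blast
    have t1: "0 \<le> 1 - s" "1 - s \<le> 1" using s by auto
    consider "j mod n = k mod n" | "j mod n = Suc k mod n" | "j mod n = Suc (Suc k) mod n" using j(2) by blast
    then show False
    proof cases
      case 1
      then have "x \<in> E k" using E_eq[OF j(1) k] j(3) by simp
      then obtain l where l: "0 \<le> l" "x = p k - l *\<^sub>R (p k - p (k - 1))" using E_param by blast
      have "x \<noteq> q + l *\<^sub>R (- d)"
        unfolding x1 by (rule avoid[OF ec da sA1 sA2 w'c wc wa e0 sm2 t1 l(1)])
      then show False using l q_def d_def by (simp add: algebra_simps)
    next
      case 2
      then have "x \<in> E (Suc k)" using E_eq[OF j(1) k1] j(3) by simp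
      then obtain l where "x = p (Suc k) - l *\<^sub>R (p (Suc k) - p (Suc k - 1))" using E_param by blast
      then have "x - q = (1 - l) *\<^sub>R e" by (simp add: q_def e_def algebra_simps)
      then have "(x - q) \<bullet> c = 0" using ec by simp
      moreover have "(x - q) \<bullet> c = \<epsilon> * ((1 - s) * (w \<bullet> c) + s * (w' \<bullet> c))"
      proof -
        have "x - q = s *\<^sub>R e + \<epsilon> *\<^sub>R z" by (simp add: s(3) z_def e_def q_def q'_def algebra_simps)
        then show ?thesis using ec by (simp add: z_def inner_add_left)
      qed
      moreover have "(1 - s) * (w \<bullet> c) + s * (w' \<bullet> c) > 0" using pos_comb[OF s(1,2) wc w'c] .
      ultimately show False using e0 by simp
    next
      case 3
      then have "x \<in> E (Suc (Suc k))" using E_eq[OF j(1), of "Suc (Suc k)"] j(3) by simp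
      then obtain l where l: "0 \<le> l" "x = p (Suc k) + l *\<^sub>R (p (Suc (Suc k)) - p (Suc k))"
        using E_param2 by blast
      have "x \<noteq> q' + l *\<^sub>R e'"
        unfolding x2 by (rule avoid[OF ec' ge[unfolded inner_commute[of g]] sB1 sB2 wc w'c w'g e0 sm3 s(1,2) l(1)])
      then show False using l q'_def e'_def by simp
    qed
  qed
  show ?thesis using \<epsilon>0 main unfolding q_def q'_def w_def w'_def a_def c_def g_def by blast
qed


lemma partB:
  assumes k: "1 \<le> k"
  shows "\<forall>\<^sub>F \<epsilon> in at_right 0.
     closed_segment (p k + \<epsilon> *\<^sub>R (u k + u (Suc k))) (p (Suc k) + \<epsilon> *\<^sub>R (u (Suc k) + u (Suc (Suc k)))) \<subseteq> outside PP \<and>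
     closed_segment (p k + (-\<epsilon>) *\<^sub>R (u k + u (Suc k))) (p (Suc k) + (-\<epsilon>) *\<^sub>R (u (Suc k) + u (Suc (Suc k)))) \<subseteq> inside PP"
proof -
  obtain \<epsilon>0 where \<epsilon>0: "\<epsilon>0 > 0" and D: "\<And>\<epsilon>. \<epsilon> \<noteq> 0 \<Longrightarrow> \<bar>\<epsilon>\<bar> < \<epsilon>0 \<Longrightarrow>
     closed_segment (p k + \<epsilon> *\<^sub>R (u k + u (Suc k))) (p (Suc k) + \<epsilon> *\<^sub>R (u (Suc k) + u (Suc (Suc k)))) \<inter> PP = {}"
    using partB_disj[OF k] by blast
  define b where "b = (1 - 1/2) *\<^sub>R p (k - 1) + (1/2::real) *\<^sub>R p k"
  have "b \<in> open_segment (p (k - 1)) (p k)"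
    unfolding in_segment(2) b_def using pne[OF k] by (intro conjI exI[of _ "1/2"]) auto
  then have b: "b \<in> rel_interior (E k)"
    unfolding polygon_edge_def rel_interior_closed_segment using pne[OF k] by simp
  have v: "u k \<bullet> u k > 0" using u_ext(1)[OF k] by (simp add: power2_norm_eq_inner[symmetric])
  have ev: "\<forall>\<^sub>F \<epsilon> in at_right 0. (0 < \<epsilon> \<and> \<epsilon> * 1 < \<epsilon>0) \<and>
     (closed_segment (b + \<epsilon> *\<^sub>R u k) (p k + \<epsilon> *\<^sub>R (u k + u (Suc k))) \<subseteq> outside PP \<and>
     closed_segment (b + (-\<epsilon>) *\<^sub>R u k) (p k + (-\<epsilon>) *\<^sub>R (u k + u (Suc k))) \<subseteq> inside PP)"
    using eventually_conj[OF eventually_conj[OF ev_pos ev_small[OF \<epsilon>0]] partA[OF k b v]] .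
  show ?thesis
  proof (rule eventually_mono[OF ev], elim conjE)
    fix \<epsilon> :: real assume h: "0 < \<epsilon>" "\<epsilon> * 1 < \<epsilon>0"
      "closed_segment (b + \<epsilon> *\<^sub>R u k) (p k + \<epsilon> *\<^sub>R (u k + u (Suc k))) \<subseteq> outside PP"
      "closed_segment (b + (-\<epsilon>) *\<^sub>R u k) (p k + (-\<epsilon>) *\<^sub>R (u k + u (Suc k))) \<subseteq> inside PP"
    have o: "p k + \<epsilon> *\<^sub>R (u k + u (Suc k)) \<in> outside PP" using h(3) ends_in_segment(2) by blast
    have i: "p k + (-\<epsilon>) *\<^sub>R (u k + u (Suc k)) \<in> inside PP" using h(4) ends_in_segment(2) by blast
    have D1: "closed_segment (p k + \<epsilon> *\<^sub>R (u k + u (Suc k))) (p (Suc k) + \<epsilon> *\<^sub>R (u (Suc k) + u (Suc (Suc k)))) \<inter> PP = {}"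
      using D[of \<epsilon>] h by simp
    have D2: "closed_segment (p k + (-\<epsilon>) *\<^sub>R (u k + u (Suc k))) (p (Suc k) + (-\<epsilon>) *\<^sub>R (u (Suc k) + u (Suc (Suc k)))) \<inter> PP = {}"
      using D[of "-\<epsilon>"] h by simp
    show "closed_segment (p k + \<epsilon> *\<^sub>R (u k + u (Suc k))) (p (Suc k) + \<epsilon> *\<^sub>R (u (Suc k) + u (Suc (Suc k)))) \<subseteq> outside PP \<and>
     closed_segment (p k + (-\<epsilon>) *\<^sub>R (u k + u (Suc k))) (p (Suc k) + (-\<epsilon>) *\<^sub>R (u (Suc k) + u (Suc (Suc k)))) \<subseteq> inside PP"
      using conn_out[OF connected_segment D1 ends_in_segment(1) o] conn_in[OF connected_segment D2 ends_in_segment(1) i]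
      by blast
  qed
qed

end

theorem lemma3p2:
  fixes n :: nat and p u :: "nat \<Rightarrow> real^2"
  assumes simple: "simple_closed_polygon n p"
    and u_periodic: "\<forall>i. u (i + n) = u i"
    and u_normal: "\<forall>i\<in>{1..n}. norm (u i) = 1 \<and> u i \<bullet> (p i - p (i - 1)) = 0 \<and>
        (\<forall>b\<in>rel_interior (polygon_edge p i). \<forall>\<^sub>F \<epsilon> in at_right 0.
            b + \<epsilon> *\<^sub>R u i \<in> outside (polygon n p) \<and> b - \<epsilon> *\<^sub>R u i \<in> inside (polygon n p))"
  shows
    "(\<forall>i\<in>{1..n}. \<forall>b\<in>rel_interior (polygon_edge p i). \<forall>v::real^2. v \<bullet> u i > 0 \<longrightarrow>
        (\<forall>\<^sub>F \<epsilon> in at_right 0.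
           closed_segment (b + \<epsilon> *\<^sub>R v) (p i + \<epsilon> *\<^sub>R (u i + u (i + 1))) \<subseteq> outside (polygon n p) \<and>
           closed_segment (b + (-\<epsilon>) *\<^sub>R v) (p i + (-\<epsilon>) *\<^sub>R (u i + u (i + 1))) \<subseteq> inside (polygon n p)))
     \<and>
     (\<forall>i\<in>{1..n}. \<forall>\<^sub>F \<epsilon> in at_right 0.
           closed_segment (p i + \<epsilon> *\<^sub>R (u i + u (i + 1))) (p (i + 1) + \<epsilon> *\<^sub>R (u (i + 1) + u (i + 2)))
             \<subseteq> outside (polygon n p) \<and>
           closed_segment (p i + (-\<epsilon>) *\<^sub>R (u i + u (i + 1))) (p (i + 1) + (-\<epsilon>) *\<^sub>R (u (i + 1) + u (i + 2)))
             \<subseteq> inside (polygon n p))"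
proof -
  interpret spoly n p u using assms by unfold_locales
  show ?thesis
  proof (intro conjI ballI allI impI)
    fix i b v assume i: "i \<in> {1..n}" and b: "b \<in> rel_interior (polygon_edge p i)" and v: "v \<bullet> u i > 0"
    show "\<forall>\<^sub>F \<epsilon> in at_right 0.
           closed_segment (b + \<epsilon> *\<^sub>R v) (p i + \<epsilon> *\<^sub>R (u i + u (i + 1))) \<subseteq> outside (polygon n p) \<and>
           closed_segment (b + (-\<epsilon>) *\<^sub>R v) (p i + (-\<epsilon>) *\<^sub>R (u i + u (i + 1))) \<subseteq> inside (polygon n p)"
      using partA[of i b v] i b v by simp
  next
    fix i assume i: "i \<in> {1..n}"
    show "\<forall>\<^sub>F \<epsilon> in at_right 0.
           closed_segment (p i + \<epsilon> *\<^sub>R (u i + u (i + 1))) (p (i + 1) + \<epsilon> *\<^sub>R (u (i + 1) + u (i + 2)))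
             \<subseteq> outside (polygon n p) \<and>
           closed_segment (p i + (-\<epsilon>) *\<^sub>R (u i + u (i + 1))) (p (i + 1) + (-\<epsilon>) *\<^sub>R (u (i + 1) + u (i + 2)))
             \<subseteq> inside (polygon n p)"
      using partB[of i] i by (simp add: numeral_2_eq_2)
  qed
qed


end
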